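(* Let $T$ take values in $\mathcal{S}\subseteq\mathbb{N}$, $q_t=\mathbb{P}(T=t)$, with $\mathbb{E}[T^\delta]<\infty$ for some $\delta>0$. Fix $\tau\in(0,1)$, a kernel $\kappa:\mathcal{S}^2\to[0,\infty)$, and two vertex types $t,s\in\mathcal{S}$ that are stable at tolerance $\tau$; set $\Lambda_n(t,s)=\lfloor nq_tq_s\kappa(t,s)\rfloor$. Let $\kappa_n'$ be another kernel for which there exist $\alpha\in(1/2-\tau/2,1/2)$ and $C>0$ with $$\kappa_n'(t,s)\ge\kappa(t,s)+\frac{Cn^{-1/2+\alpha}}{\sqrt{q_tq_s}},$$ and let $A_n$ be the arc-to-vertex-type function of $\texttt{IRD}_n(T,\kappa_n')$. Then for all sufficiently large $n$, $\mathbb{P}(A_n(t,s)<\Lambda_n(t,s))\le2\exp(-\log(n)^2/2)$.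
   Context: $\texttt{IRD}_n(T,\kappa_n')$: vertex set $[n]$, types $T_v$ i.i.d. as $T$, each arc $(v,w)$, $v\ne w$, present independently with probability $\min\{\kappa_n'(T_v,T_w)/n,1\}$. Arc-to-vertex-type function: $A_n(t,s)=|\{(v,w)\text{ arc}:T_v=t,T_w=s\}|$. Stability: $u_n^\uparrow(\tau)=\inf\{t:q_s<n^{-1+\tau}\ \forall s\ge t\}$; type $t$ is stable at tolerance $\tau$ if $t<u_n^\uparrow(\tau)$. *)

theory Defs
  imports "HOL-Probability.Probability"
begin

text \<open>Vertex set [n] = {1..n}; a realisation of IRD_n is a pair (types, arcs):
  types v is the type of vertex v, arcs (v,w) says whether the arc (v,w) is present.\<close>

definition vertices :: "nat \<Rightarrow> nat set" where
  "vertices n = {1..n}"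

definition arc_slots :: "nat \<Rightarrow> (nat \<times> nat) set" where
  "arc_slots n = {(v, w). v \<in> vertices n \<and> w \<in> vertices n \<and> v \<noteq> w}"

definition IRD :: "nat \<Rightarrow> nat pmf \<Rightarrow> (nat \<Rightarrow> nat \<Rightarrow> real)
    \<Rightarrow> ((nat \<Rightarrow> nat) \<times> (nat \<times> nat \<Rightarrow> bool)) pmf" where
  "IRD n T k =
     bind_pmf (Pi_pmf (vertices n) 0 (\<lambda>_. T)) (\<lambda>types.
     bind_pmf (Pi_pmf (arc_slots n) False
                 (\<lambda>(v, w). bernoulli_pmf (min (k (types v) (types w) / real n) 1))) (\<lambda>arcs.
     return_pmf (types, arcs)))"

definition arc_count :: "nat \<Rightarrow> (nat \<Rightarrow> nat) \<times> (nat \<times> nat \<Rightarrow> bool) \<Rightarrow> nat \<Rightarrow> nat \<Rightarrow> nat" where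
  "arc_count n G t s =
     card {(v, w). (v, w) \<in> arc_slots n \<and> snd G (v, w) \<and> fst G v = t \<and> fst G w = s}"

definition u_up :: "nat pmf \<Rightarrow> nat \<Rightarrow> real \<Rightarrow> nat" where
  "u_up T n \<tau> = Inf {t. \<forall>s\<ge>t. pmf T s < real n powr (-1 + \<tau>)}"

definition stable :: "nat pmf \<Rightarrow> nat \<Rightarrow> real \<Rightarrow> nat \<Rightarrow> bool" where
  "stable T n \<tau> t \<longleftrightarrow> t < u_up T n \<tau>"

end

theory Submission
  imports Defs "HOL-Real_Asymp.Real_Asymp"
begin

lemma binom_mgf:
  assumes p: "p \<in> {0..1}"
  shows "(\<integral>\<^sup>+x. ennreal (exp (-l * real x)) \<partial>binomial_pmf m p) = ennreal ((1 - p + p * exp (-l)) ^ m)"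
proof (induction m)
  case 0
  then show ?case using p by (simp add: binomial_pmf_0)
next
  case (Suc m)
  have nn: "0 \<le> 1 - p + p * exp (-l)" using p by (auto intro!: add_nonneg_nonneg)
  have "(\<integral>\<^sup>+x. ennreal (exp (-l * real x)) \<partial>binomial_pmf (Suc m) p)
      = (\<integral>\<^sup>+b. (\<integral>\<^sup>+k. ennreal (exp (-l * (if b then 1 else 0))) * ennreal (exp (-l * real k)) \<partial>binomial_pmf m p) \<partial>bernoulli_pmf p)"
    using p unfolding binomial_pmf_Suc[OF p]
    by (simp del: nn_integral_bernoulli_pmf, intro nn_integral_cong)
       (auto simp: ennreal_mult'[symmetric] exp_add[symmetric] algebra_simps)
  also have "\<dots> = (\<integral>\<^sup>+b. ennreal (exp (-l * (if b then 1 else 0))) * ennreal ((1 - p + p * exp (-l)) ^ m) \<partial>bernoulli_pmf p)"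
    using Suc by (simp add: nn_integral_cmult)
  also have "\<dots> = ennreal (exp (-l)) * ennreal ((1 - p + p * exp (-l)) ^ m) * ennreal p
       + ennreal ((1 - p + p * exp (-l)) ^ m) * ennreal (1 - p)"
    using p by simp
  also have "\<dots> = ennreal (exp (-l) * ((1 - p + p * exp (-l)) ^ m) * p
       + ((1 - p + p * exp (-l)) ^ m) * (1 - p))"
    using p nn by (simp add: ennreal_mult'[symmetric] ennreal_plus[symmetric] del: ennreal_plus)
  also have "\<dots> = ennreal ((1 - p + p * exp (-l)) ^ Suc m)"
    by (simp add: algebra_simps)
  finally show ?case .
qed

lemma exp_neg_le_quad:
  fixes x :: real assumes "0 \<le> x"
  shows "exp (- x) \<le> 1 - x + x\<^sup>2 / 2"
proof -
  let ?f = "\<lambda>y::real. 1 - y + y\<^sup>2 / 2 - exp (- y)"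
  have "?f 0 \<le> ?f x"
  proof (rule DERIV_nonneg_imp_nondecreasing[OF assms])
    fix y :: real assume "0 \<le> y" "y \<le> x"
    show "\<exists>d. (?f has_real_derivative d) (at y) \<and> 0 \<le> d"
      apply (rule exI[of _ "- 1 + y + exp (- y)"])
      apply (intro conjI)
       apply (auto intro!: derivative_eq_intros)[1]
      using exp_ge_add_one_self[of "-y"] by linarith
  qed
  then show ?thesis by simp
qed

lemma binom_chernoff_lower:
  assumes p: "p \<in> {0..1}" and k: "0 \<le> k" "k \<le> \<mu>" and mu: "0 < \<mu>" "\<mu> \<le> real m * p"
  shows "measure_pmf.prob (binomial_pmf m p) {x. real x \<le> k} \<le> exp (- (\<mu> - k)\<^sup>2 / (2 * \<mu>))"
proof (cases "k = \<mu>")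
  case True
  then show ?thesis by simp
next
  case False
  define l where "l = (\<mu> - k) / \<mu>"
  have l: "0 < l" "l \<le> 1" using False k mu by (auto simp: l_def field_simps)
  have b0: "0 \<le> 1 - p + p * exp (-l)" using p by (auto intro!: add_nonneg_nonneg)
  have b1: "0 \<le> exp (l * k) * (1 - p + p * exp (-l)) ^ m" using b0 by simp
  have "emeasure (measure_pmf (binomial_pmf m p)) {x\<in>UNIV. real x \<le> k}
     \<le> ennreal (exp (l * k)) * (\<integral>\<^sup>+x. ennreal (exp (-l * real x)) * indicator UNIV x \<partial>binomial_pmf m p)"
    by (rule Chernoff_ineq_nn_integral_le) (use l in auto)
  also have "(\<integral>\<^sup>+x. ennreal (exp (-l * real x)) * indicator UNIV x \<partial>binomial_pmf m p)
      = ennreal ((1 - p + p * exp (-l)) ^ m)"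
    using binom_mgf[OF p, where l=l and m=m] by simp
  also have "ennreal (exp (l * k)) * ennreal ((1 - p + p * exp (-l)) ^ m)
      = ennreal (exp (l * k) * (1 - p + p * exp (-l)) ^ m)"
    using p by (simp add: ennreal_mult')
  finally have 1: "measure_pmf.prob (binomial_pmf m p) {x. real x \<le> k} \<le> exp (l * k) * (1 - p + p * exp (-l)) ^ m"
    using p by (simp add: measure_pmf.emeasure_eq_measure ennreal_le_iff2 add_nonneg_nonneg) (use b1 in linarith)
  have "1 - p + p * exp (-l) \<le> exp (p * (exp (-l) - 1))"
    using exp_ge_add_one_self[of "p * (exp (-l) - 1)"] by (simp add: algebra_simps)
  hence "(1 - p + p * exp (-l)) ^ m \<le> exp (p * (exp (-l) - 1)) ^ m"
    by (rule power_mono[OF _ b0])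
  also have "\<dots> = exp (real m * p * (exp (-l) - 1))"
    by (simp add: exp_of_nat_mult[symmetric] mult_ac)
  also have "\<dots> \<le> exp (\<mu> * (- l + l\<^sup>2 / 2))"
  proof -
    have e: "exp (-l) - 1 \<le> - l + l\<^sup>2 / 2" using exp_neg_le_quad[of l] l by simp
    have neg: "- l + l\<^sup>2 / 2 \<le> 0" using l by (simp add: power2_eq_square field_simps mult_left_le)
    have "real m * p * (exp (-l) - 1) \<le> real m * p * (- l + l\<^sup>2 / 2)"
      using e p by (intro mult_left_mono) auto
    also have "\<dots> \<le> \<mu> * (- l + l\<^sup>2 / 2)"
      using mu neg by (intro mult_right_mono_neg) auto
    finally show ?thesis by simp
  qed
  finally have 2: "exp (l * k) * (1 - p + p * exp (-l)) ^ m \<le> exp (l * k) * exp (\<mu> * (- l + l\<^sup>2 / 2))"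
    by (intro mult_left_mono) auto
  also have "exp (l * k) * exp (\<mu> * (- l + l\<^sup>2 / 2)) = exp (- (\<mu> - k)\<^sup>2 / (2 * \<mu>))"
  proof -
    have "l * k + \<mu> * (- l + l\<^sup>2 / 2) = - (\<mu> - k)\<^sup>2 / (2 * \<mu>)"
      using mu unfolding l_def by (simp add: field_simps power2_eq_square)
    then show ?thesis by (simp add: exp_add[symmetric])
  qed
  finally show ?thesis using 1 by linarith
qed

lemma map_eq_bernoulli: "map_pmf (\<lambda>x. x = t) T = bernoulli_pmf (pmf T t)"
proof (rule pmf_eqI)
  fix b :: bool
  show "pmf (map_pmf (\<lambda>x. x = t) T) b = pmf (bernoulli_pmf (pmf T t)) b"
  proof (cases b)
    case True
    have "(\<lambda>x. x = t) -` {True} = {t}" by auto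
    then show ?thesis using True by (simp add: pmf_map measure_pmf_single pmf_le_1)
  next
    case False
    have "(\<lambda>x. x = t) -` {False} = UNIV - {t}" by auto
    then show ?thesis using False measure_pmf.prob_compl[of "{t}" T]
      by (simp add: pmf_map measure_pmf_single pmf_le_1)
  qed
qed

lemma count_binomial:
  assumes "finite V"
  shows "map_pmf (\<lambda>ty. card {v\<in>V. ty v = t}) (Pi_pmf V d (\<lambda>_. T)) = binomial_pmf (card V) (pmf T t)"
proof -
  have "Pi_pmf V (d = t) (\<lambda>_. map_pmf (\<lambda>x. x = t) T) = map_pmf (\<lambda>h. (\<lambda>x. x = t) \<circ> h) (Pi_pmf V d (\<lambda>_. T))"
    by (rule Pi_pmf_map) (use assms in auto)
  hence "map_pmf (\<lambda>ty. card {v\<in>V. ty v = t}) (Pi_pmf V d (\<lambda>_. T))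
       = map_pmf (\<lambda>f. card {v\<in>V. f v}) (Pi_pmf V (d = t) (\<lambda>_. bernoulli_pmf (pmf T t)))"
    by (simp add: map_eq_bernoulli pmf.map_comp o_def)
  also have "\<dots> = binomial_pmf (card V) (pmf T t)"
    by (rule binomial_pmf_altdef'[symmetric]) (use assms in \<open>auto simp: pmf_le_1\<close>)
  finally show ?thesis .
qed

lemma count_hoeffding:
  assumes "finite V" "card V = n" "n > 0" "\<epsilon> \<ge> 0"
  shows "measure_pmf.prob (Pi_pmf V d (\<lambda>_. T)) {ty. real (card {v\<in>V. ty v = t}) \<le> real n * pmf T t - \<epsilon>}
     \<le> exp (-2 * \<epsilon>\<^sup>2 / real n)"
proof -
  have "measure_pmf.prob (Pi_pmf V d (\<lambda>_. T)) {ty. real (card {v\<in>V. ty v = t}) \<le> real n * pmf T t - \<epsilon>}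
     = measure_pmf.prob (map_pmf (\<lambda>ty. card {v\<in>V. ty v = t}) (Pi_pmf V d (\<lambda>_. T))) {x. real x \<le> real n * pmf T t - \<epsilon>}"
    by simp
  also have "\<dots> = measure_pmf.prob (binomial_pmf n (pmf T t)) {x. real x \<le> real n * pmf T t - \<epsilon>}"
    using count_binomial[OF assms(1), of t d T] assms(2) by (simp only:)
  also have "\<dots> \<le> exp (-2 * \<epsilon>\<^sup>2 / real n)"
    by (rule binomial_distribution.prob_le) (use assms in \<open>auto simp: binomial_distribution_def pmf_le_1\<close>)
  finally show ?thesis .
qed

lemma arcs_binomial:
  assumes "finite SL" "S \<subseteq> SL" "p \<in> {0..1}" "\<And>e. e \<in> S \<Longrightarrow> pe e = bernoulli_pmf p"
  shows "map_pmf (\<lambda>ar. card {e\<in>S. ar e}) (Pi_pmf SL False pe) = binomial_pmf (card S) p"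
proof -
  have fS: "finite S" using assms finite_subset by blast
  have "map_pmf (\<lambda>ar. card {e\<in>S. ar e}) (Pi_pmf SL False pe)
      = map_pmf (\<lambda>ar. card {e\<in>S. ar e}) (map_pmf (\<lambda>f x. if x \<in> S then f x else False) (Pi_pmf SL False pe))"
    by (simp add: pmf.map_comp o_def cong: conj_cong)
  also have "\<dots> = map_pmf (\<lambda>ar. card {e\<in>S. ar e}) (Pi_pmf S False pe)"
    using Pi_pmf_subset[OF assms(1,2), of False pe] by simp
  also have "Pi_pmf S False pe = Pi_pmf S False (\<lambda>_. bernoulli_pmf p)"
    by (rule Pi_pmf_cong) (use assms in auto)
  also have "map_pmf (\<lambda>ar. card {e\<in>S. ar e}) \<dots> = binomial_pmf (card S) p"
    by (rule binomial_pmf_altdef'[symmetric]) (use assms fS in auto)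
  finally show ?thesis .
qed


definition good :: "real \<Rightarrow> real \<Rightarrow> real \<Rightarrow> real \<Rightarrow> real \<Rightarrow> nat \<Rightarrow> bool" where
  "good qt qs k C \<alpha> n = (
     let L = ln (real n); a = sqrt (real n) * L; q = qt * qs; k0 = k + C * real n powr (-1/2 + \<alpha>) / sqrt q;
       mu = ((real n * qt - a) * (real n * qs - a) - real n) * k0 / real n
     in real n * q * k < mu \<and> mu * L\<^sup>2 \<le> (mu - real n * q * k)\<^sup>2 \<and> k0 \<le> real n \<and> 0 \<le> real n * qt - a \<and> 0 \<le> real n * qs - a
       \<and> 2 \<le> exp (3/2 * L\<^sup>2) \<and> 3 \<le> real n)"

lemma asym:
  fixes qt qs k C \<alpha> :: real assumes "qt > 0" "qs > 0" "k > 0" "C > 0" "\<alpha> > 0" "\<alpha> < 1/2"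
  shows "eventually (good qt qs k C \<alpha>) sequentially"
  using assms unfolding good_def Let_def by (intro eventually_conj; real_asymp)

lemma card_S_lower:
  fixes ty :: "nat \<Rightarrow> nat"
  shows "real (card {v\<in>vertices n. ty v = t}) * real (card {v\<in>vertices n. ty v = s}) - real n
     \<le> real (card {e\<in>arc_slots n. ty (fst e) = t \<and> ty (snd e) = s})"
proof -
  let ?Vt = "{v\<in>vertices n. ty v = t}" and ?Vs = "{v\<in>vertices n. ty v = s}"
  let ?D = "(\<lambda>v. (v, v)) ` vertices n"
  have fin: "finite (arc_slots n)" unfolding arc_slots_def vertices_def
    by (rule finite_subset[of _ "{1..n} \<times> {1..n}"]) auto
  have sub: "?Vt \<times> ?Vs - ?D \<subseteq> {e\<in>arc_slots n. ty (fst e) = t \<and> ty (snd e) = s}"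
    unfolding arc_slots_def by auto
  have "card (?Vt \<times> ?Vs) - card ?D \<le> card (?Vt \<times> ?Vs - ?D)"
    by (rule diff_card_le_card_Diff) (simp add: vertices_def)
  also have "\<dots> \<le> card {e\<in>arc_slots n. ty (fst e) = t \<and> ty (snd e) = s}"
    by (rule card_mono[OF _ sub]) (use fin in auto)
  finally have 1: "card ?Vt * card ?Vs - card ?D \<le> card {e\<in>arc_slots n. ty (fst e) = t \<and> ty (snd e) = s}"
    by (simp add: card_cartesian_product)
  have 2: "card ?D \<le> n"
    using card_image_le[of "vertices n" "\<lambda>v. (v, v)"] by (simp add: vertices_def)
  have "real (card ?Vt) * real (card ?Vs) - real n \<le> real (card ?Vt * card ?Vs - card ?D)"
  proof -
    have g: "\<And>x z. z \<le> n \<Longrightarrow> real x - real n \<le> real (x - z)"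
      by (case_tac "z \<le> x") (auto simp: of_nat_diff)
    show ?thesis using g[OF 2, of "card ?Vt * card ?Vs"] by simp
  qed
  also have "\<dots> \<le> real (card {e\<in>arc_slots n. ty (fst e) = t \<and> ty (snd e) = s})"
    using 1 by linarith
  finally show ?thesis .
qed


theorem lemma3:
  fixes T :: "nat pmf" and \<delta> \<tau> \<alpha> C :: real
    and \<kappa> :: "nat \<Rightarrow> nat \<Rightarrow> real" and \<kappa>' :: "nat \<Rightarrow> nat \<Rightarrow> nat \<Rightarrow> real"
    and t s :: nat
  assumes "\<delta> > 0"
    and "integrable (measure_pmf T) (\<lambda>x. real x powr \<delta>)"
    and "0 < \<tau>" and "\<tau> < 1"
    and "\<forall>x y. \<kappa> x y \<ge> 0"
    and "\<forall>n x y. \<kappa>' n x y \<ge> 0"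
    and "1/2 - \<tau>/2 < \<alpha>" and "\<alpha> < 1/2" and "C > 0"
  shows "\<exists>N. \<forall>n\<ge>N.
           stable T n \<tau> t \<and> stable T n \<tau> s \<and>
           \<kappa>' n t s \<ge> \<kappa> t s + C * real n powr (-1/2 + \<alpha>) / sqrt (pmf T t * pmf T s)
           \<longrightarrow> measure_pmf.prob (IRD n T (\<kappa>' n))
                 {G. int (arc_count n G t s) < \<lfloor>real n * pmf T t * pmf T s * \<kappa> t s\<rfloor>}
               \<le> 2 * exp (- ((ln (real n))\<^sup>2) / 2)"
proof -
  define qt where "qt = pmf T t"
  define qs where "qs = pmf T s"
  define k0 where "k0 = \<kappa> t s"
  have k0nn: "k0 \<ge> 0" using assms(5) by (simp add: k0_def)
  show ?thesis
  proof (cases "qt = 0 \<or> qs = 0 \<or> k0 = 0")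
    case True
    have E: "{G. int (arc_count n G t s) < \<lfloor>real n * pmf T t * pmf T s * \<kappa> t s\<rfloor>} = {}" for n
      using True by (auto simp: qt_def qs_def k0_def)
    show ?thesis
      by (intro exI[of _ 0] allI impI, unfold E) simp
  next
    case False
    have qt: "qt > 0" and qs: "qs > 0" and k0: "k0 > 0"
      using False k0nn by (auto simp: qt_def qs_def order.not_eq_order_implies_strict)
    have al: "\<alpha> > 0" using assms(4,7) by simp
    obtain N where N: "\<And>n. n \<ge> N \<Longrightarrow> good qt qs k0 C \<alpha> n"
      using asym[OF qt qs k0 assms(9) al assms(8)] unfolding eventually_sequentially by blast
    show ?thesis
    proof (intro exI[of _ N] allI impI)
      fix n assume nN: "n \<ge> N"
      assume H: "stable T n \<tau> t \<and> stable T n \<tau> s \<and>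
           \<kappa>' n t s \<ge> \<kappa> t s + C * real n powr (-1/2 + \<alpha>) / sqrt (pmf T t * pmf T s)"
      define L where "L = ln (real n)"
      define a where "a = sqrt (real n) * L"
      define q where "q = qt * qs"
      define kk where "kk = k0 + C * real n powr (-1/2 + \<alpha>) / sqrt q"
      define mu where "mu = ((real n * qt - a) * (real n * qs - a) - real n) * kk / real n"
      define k where "k = real n * q * k0"
      have c1: "k < mu" and c2: "mu * L\<^sup>2 \<le> (mu - k)\<^sup>2" and c3: "kk \<le> real n"
        and c4: "0 \<le> real n * qt - a" and c5: "0 \<le> real n * qs - a" and c6: "2 \<le> exp (3/2 * L\<^sup>2)"
        and n3: "3 \<le> real n"
        using N[OF nN] unfolding good_def Let_def L_def[symmetric] a_def[symmetric] q_def[symmetric]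
          kk_def[symmetric] mu_def[symmetric] k_def[symmetric] by (simp_all only:)
      have kappa': "\<kappa>' n t s \<ge> kk"
        using H by (simp add: kk_def q_def qt_def qs_def k0_def)
      have npos: "n > 0" using n3 by simp
      have Lnn: "L \<ge> 0" using n3 by (simp add: L_def)
      have ann: "a \<ge> 0" using Lnn by (simp add: a_def)
      have a2: "a\<^sup>2 / real n = L\<^sup>2" using npos by (simp add: a_def power_mult_distrib)
      define V where "V = vertices n"
      define SL where "SL = arc_slots n"
      have finV: "finite V" and cardV: "card V = n" by (simp_all add: V_def vertices_def)
      have finSL: "finite SL" unfolding SL_def arc_slots_def vertices_def
        by (rule finite_subset[of _ "{1..n} \<times> {1..n}"]) auto
      define PT where "PT = Pi_pmf V (0::nat) (\<lambda>_. T)"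
      define PA where "PA = (\<lambda>ty::nat\<Rightarrow>nat. Pi_pmf SL False
          (\<lambda>(v, w). bernoulli_pmf (min (\<kappa>' n (ty v) (ty w) / real n) 1)))"
      have IRD_eq: "IRD n T (\<kappa>' n) = bind_pmf PT (\<lambda>ty. map_pmf (Pair ty) (PA ty))"
        unfolding IRD_def PT_def PA_def V_def SL_def map_pmf_def by simp
      define E where "E = {G. int (arc_count n G t s) < \<lfloor>real n * pmf T t * pmf T s * \<kappa> t s\<rfloor>}"
      have floor_eq: "real n * pmf T t * pmf T s * \<kappa> t s = k"
        by (simp add: k_def q_def qt_def qs_def k0_def mult.assoc)
      define St where "St = (\<lambda>ty::nat\<Rightarrow>nat. {e\<in>SL. ty (fst e) = t \<and> ty (snd e) = s})"
      define Bad where "Bad = {ty. real (card {v\<in>V. ty v = t}) \<le> real n * pmf T t - a}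
          \<union> {ty. real (card {v\<in>V. ty v = s}) \<le> real n * pmf T s - a}"
      define p where "p = min (\<kappa>' n t s / real n) 1"
      have kknn: "kk \<ge> 0" unfolding kk_def using k0 assms(9) qt qs
        by (intro add_nonneg_nonneg divide_nonneg_nonneg mult_nonneg_nonneg) (auto simp: q_def)
      have p01: "p \<in> {0..1}" using assms(6) by (simp add: p_def)
      have pge: "kk / real n \<le> p"
        using c3 kappa' npos by (auto simp: p_def divide_right_mono)
      have knn: "0 \<le> k" using k0 qt qs by (simp add: k_def q_def)
      have mupos: "0 < mu" using c1 knn by linarith
      define M0 where "M0 = (real n * qt - a) * (real n * qs - a) - real n"
      have mu_eq: "mu = M0 * (kk / real n)" by (simp add: mu_def M0_def)
      have M0pos: "M0 > 0"
      proof (rule ccontr)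
        assume "\<not> M0 > 0"
        hence "M0 * (kk / real n) \<le> 0" using kknn npos by (intro mult_nonpos_nonneg) auto
        thus False using mupos mu_eq by simp
      qed
      have chern: "exp (- (mu - k)\<^sup>2 / (2 * mu)) \<le> exp (- L\<^sup>2 / 2)"
      proof -
        have "L\<^sup>2 / 2 \<le> (mu - k)\<^sup>2 / (2 * mu)"
          using c2 mupos by (simp add: field_simps)
        thus ?thesis by simp
      qed
      have inner: "emeasure (PA ty) (Pair ty -` E) \<le> indicator Bad ty + ennreal (exp (- L\<^sup>2 / 2))" for ty
      proof (cases "ty \<in> Bad")
        case True
        have "emeasure (PA ty) (Pair ty -` E) \<le> 1"
          by (rule measure_pmf.emeasure_le_1)
        also have "\<dots> \<le> indicator Bad ty + ennreal (exp (- L\<^sup>2 / 2))"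
          using True by simp
        finally show ?thesis .
      next
        case False
        have Nt: "real n * qt - a \<le> real (card {v\<in>V. ty v = t})"
          and Ns: "real n * qs - a \<le> real (card {v\<in>V. ty v = s})"
          using False by (auto simp: Bad_def qt_def qs_def)
        have "M0 \<le> real (card {v\<in>V. ty v = t}) * real (card {v\<in>V. ty v = s}) - real n"
          unfolding M0_def using Nt Ns c4 c5 by (intro diff_right_mono mult_mono) auto
        also have "\<dots> \<le> real (card (St ty))"
          using card_S_lower[where ty=ty and n=n and t=t and s=s] by (simp add: St_def V_def SL_def)
        finally have cardSt: "M0 \<le> real (card (St ty))" .
        have "mu \<le> real (card (St ty)) * p"
        proof -
          have "mu = M0 * (kk / real n)" by (rule mu_eq)
          also have "\<dots> \<le> M0 * p" using pge M0pos by (intro mult_left_mono) auto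
          also have "\<dots> \<le> real (card (St ty)) * p" using cardSt p01 by (intro mult_right_mono) auto
          finally show ?thesis .
        qed
        have sub: "Pair ty -` E \<subseteq> {ar. real (card {e\<in>St ty. ar e}) \<le> k}"
        proof
          fix ar assume "ar \<in> Pair ty -` E"
          hence "int (arc_count n (ty, ar) t s) < \<lfloor>k\<rfloor>" by (simp add: E_def floor_eq)
          moreover have "arc_count n (ty, ar) t s = card {e\<in>St ty. ar e}"
            unfolding arc_count_def St_def SL_def
            by (intro arg_cong[where f = card]) auto
          ultimately have "int (card {e\<in>St ty. ar e}) < \<lfloor>k\<rfloor>" by simp
          hence "real (card {e\<in>St ty. ar e}) < k" by linarith
          thus "ar \<in> {ar. real (card {e\<in>St ty. ar e}) \<le> k}" by simp
        qed
        have binom: "map_pmf (\<lambda>ar. card {e\<in>St ty. ar e}) (PA ty) = binomial_pmf (card (St ty)) p"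
          unfolding PA_def
          by (rule arcs_binomial[OF finSL _ p01]) (auto simp: St_def p_def)
        have "emeasure (PA ty) (Pair ty -` E) \<le> emeasure (PA ty) {ar. real (card {e\<in>St ty. ar e}) \<le> k}"
          by (rule emeasure_mono[OF sub]) simp
        also have "\<dots> = emeasure (map_pmf (\<lambda>ar. card {e\<in>St ty. ar e}) (PA ty)) {x. real x \<le> k}"
          by simp
        also have "\<dots> = ennreal (measure_pmf.prob (binomial_pmf (card (St ty)) p) {x. real x \<le> k})"
          unfolding binom by (simp add: measure_pmf.emeasure_eq_measure)
        also have "\<dots> \<le> ennreal (exp (- (mu - k)\<^sup>2 / (2 * mu)))"
          by (intro ennreal_leI binom_chernoff_lower p01 knn) (use c1 mupos \<open>mu \<le> real (card (St ty)) * p\<close> in auto)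
        also have "\<dots> \<le> ennreal (exp (- L\<^sup>2 / 2))"
          by (intro ennreal_leI chern)
        also have "\<dots> \<le> indicator Bad ty + ennreal (exp (- L\<^sup>2 / 2))" by simp
        finally show ?thesis .
      qed
      have hoeff: "measure_pmf.prob PT {ty. real (card {v\<in>V. ty v = u}) \<le> real n * pmf T u - a}
          \<le> exp (-2 * L\<^sup>2)" for u
      proof -
        have "measure_pmf.prob PT {ty. real (card {v\<in>V. ty v = u}) \<le> real n * pmf T u - a}
            \<le> exp (-2 * a\<^sup>2 / real n)"
          unfolding PT_def by (rule count_hoeffding[OF finV cardV npos ann])
        also have "-2 * a\<^sup>2 / real n = -2 * L\<^sup>2" using a2 by simp
        finally show ?thesis .
      qed
      have "emeasure (IRD n T (\<kappa>' n)) E = (\<integral>\<^sup>+ty. emeasure (PA ty) (Pair ty -` E) \<partial>PT)"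
        unfolding IRD_eq by simp
      also have "\<dots> \<le> (\<integral>\<^sup>+ty. indicator Bad ty + ennreal (exp (- L\<^sup>2 / 2)) \<partial>PT)"
        by (intro nn_integral_mono inner)
      also have "\<dots> = emeasure PT Bad + ennreal (exp (- L\<^sup>2 / 2))"
        by (subst nn_integral_add) (auto simp: measure_pmf.emeasure_space_1)
      also have "emeasure PT Bad \<le> emeasure PT {ty. real (card {v\<in>V. ty v = t}) \<le> real n * pmf T t - a}
          + emeasure PT {ty. real (card {v\<in>V. ty v = s}) \<le> real n * pmf T s - a}"
        unfolding Bad_def by (rule emeasure_subadditive) auto
      also have "\<dots> \<le> ennreal (exp (-2 * L\<^sup>2)) + ennreal (exp (-2 * L\<^sup>2))"
        using hoeff[of t] hoeff[of s]
        by (intro add_mono) (auto simp: measure_pmf.emeasure_eq_measure intro!: ennreal_leI)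
      finally have "emeasure (IRD n T (\<kappa>' n)) E
          \<le> ennreal (exp (-2 * L\<^sup>2)) + ennreal (exp (-2 * L\<^sup>2)) + ennreal (exp (- L\<^sup>2 / 2))"
        by (simp add: add_right_mono)
      also have "\<dots> = ennreal (2 * exp (-2 * L\<^sup>2) + exp (- L\<^sup>2 / 2))"
        by (simp flip: ennreal_plus)
      finally have X: "ennreal (measure_pmf.prob (IRD n T (\<kappa>' n)) E) \<le> ennreal (2 * exp (-2 * L\<^sup>2) + exp (- L\<^sup>2 / 2))"
        by (simp only: measure_pmf.emeasure_eq_measure)
      have fin: "measure_pmf.prob (IRD n T (\<kappa>' n)) E \<le> 2 * exp (-2 * L\<^sup>2) + exp (- L\<^sup>2 / 2)"
        by (rule ennreal_le_iff[THEN iffD1, OF _ X]) (intro add_nonneg_nonneg; simp)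
      have "2 * exp (-2 * L\<^sup>2) \<le> exp (- L\<^sup>2 / 2)"
      proof -
        have "exp (- L\<^sup>2 / 2) = exp (3/2 * L\<^sup>2) * exp (-2 * L\<^sup>2)"
          by (simp add: exp_add[symmetric])
        thus ?thesis using c6 by (simp add: mult_right_mono)
      qed
      with fin have "measure_pmf.prob (IRD n T (\<kappa>' n)) E \<le> 2 * exp (- L\<^sup>2 / 2)" by linarith
      thus "measure_pmf.prob (IRD n T (\<kappa>' n))
                 {G. int (arc_count n G t s) < \<lfloor>real n * pmf T t * pmf T s * \<kappa> t s\<rfloor>}
               \<le> 2 * exp (- ((ln (real n))\<^sup>2) / 2)"
        by (simp add: E_def L_def)
    qed
  qed
qed

end
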